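(* Fix $N\ge1$ and let $\mathbf{F}$ be either $\mathbf{F}^{\rm Midpt}$ or $\mathbf{F}^{\rm Mass}$ (defined in the context). Given an initial condition $\mathbf{b}_0\in\mathbb{C}^N$, there exists $\Delta t_1>0$ such that for any fixed $\Delta t\le\Delta t_1$ the scheme $\mathbf{b}_{n+1}=\mathbf{b}_n+\Delta t\,\mathbf{F}(\mathbf{b}_n,\mathbf{b}_{n+1})$ can always be solved: for every $n\ge0$, the iterate $\mathbf{b}_{n+1}$ exists.
   Context: For $\mathbf{b}_n,\mathbf{b}_{n+1}\in\mathbb{C}^N$ with components $b_{j,n},b_{j,n+1}$, set $b_{0,m}=b_{N+1,m}=0$ for $m\in\{n,n+1\}$, and define $b_{j,n+1/2}=\tfrac12(b_{j,n}+b_{j,n+1})$, $|b|^2_{j,n+1/2}=\tfrac12(|b_{j,n}|^2+|b_{j,n+1}|^2)$. For $j=1,\dots,N$: $F^{\rm Midpt}_j=-i|b_{j,n+1/2}|^2b_{j,n+1/2}+2i\,\overline{b_{j,n+1/2}}(b_{j-1,n+1/2}^2+b_{j+1,n+1/2}^2)$ (implicit midpoint); $F^{\rm Mass}_j=-i|b|^2_{j,n+1/2}b_{j,n+1/2}+2i\,\overline{b_{j,n+1/2}}(b_{j+1,n+1/2}^2+b_{j-1,n+1/2}^2)$ (modified midpoint). Both are discretizations of the toy model system $-i\dot b_j=-|b_j|^2b_j+2b_{j-1}^2\bar b_j+2b_{j+1}^2\bar b_j$, $b_0=b_{N+1}=0$, and both exactly conserve the mass $\sum_j|b_{j,n}|^2$;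 they are the "mass preserving schemes". *)

theory Defs
  imports Complex_Main
begin

text \<open>A vector in C^N is represented as a function nat => complex whose
  components are b 1, ..., b N; components 0 and N+1 (and beyond) are zero,
  which encodes the boundary convention b_0 = b_{N+1} = 0.\<close>

definition vecN :: "nat \<Rightarrow> (nat \<Rightarrow> complex) \<Rightarrow> bool" where
  "vecN N b \<longleftrightarrow> (\<forall>j. (j = 0 \<or> N < j) \<longrightarrow> b j = 0)"

definition bmid :: "nat \<Rightarrow> (nat \<Rightarrow> complex) \<Rightarrow> (nat \<Rightarrow> complex) \<Rightarrow> nat \<Rightarrow> complex" where
  "bmid N x y j = (if 1 \<le> j \<and> j \<le> N then (x j + y j) / 2 else 0)"

definition absq_mid :: "(nat \<Rightarrow> complex) \<Rightarrow> (nat \<Rightarrow> complex) \<Rightarrow> nat \<Rightarrow> real" where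
  "absq_mid x y j = ((cmod (x j))\<^sup>2 + (cmod (y j))\<^sup>2) / 2"

definition F_midpt :: "nat \<Rightarrow> (nat \<Rightarrow> complex) \<Rightarrow> (nat \<Rightarrow> complex) \<Rightarrow> nat \<Rightarrow> complex" where
  "F_midpt N x y j =
     (let m = bmid N x y in
      - \<i> * complex_of_real ((cmod (m j))\<^sup>2) * m j
      + 2 * \<i> * cnj (m j) * ((m (j - 1))\<^sup>2 + (m (j + 1))\<^sup>2))"

definition F_mass :: "nat \<Rightarrow> (nat \<Rightarrow> complex) \<Rightarrow> (nat \<Rightarrow> complex) \<Rightarrow> nat \<Rightarrow> complex" where
  "F_mass N x y j =
     (let m = bmid N x y in
      - \<i> * complex_of_real (absq_mid x y j) * m j
      + 2 * \<i> * cnj (m j) * ((m (j + 1))\<^sup>2 + (m (j - 1))\<^sup>2))"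

definition scheme_step ::
  "(nat \<Rightarrow> (nat \<Rightarrow> complex) \<Rightarrow> (nat \<Rightarrow> complex) \<Rightarrow> nat \<Rightarrow> complex)
   \<Rightarrow> nat \<Rightarrow> real \<Rightarrow> (nat \<Rightarrow> complex) \<Rightarrow> (nat \<Rightarrow> complex) \<Rightarrow> bool" where
  "scheme_step F N dt x y \<longleftrightarrow>
     vecN N y \<and> (\<forall>j\<in>{1..N}. y j = x j + complex_of_real dt * F N x y j)"

end

theory Submission
  imports Defs
begin

lemma re_key: "Re ((-\<i> * complex_of_real c * m + 2*\<i>*cnj m*(p^2+q^2)) * cnj m) = -2*(Im (cnj m^2 * p^2) + Im (cnj m^2 * q^2))"
  by (simp add: algebra_simps power2_eq_square)
lemma norm_diff: "(cmod y)^2 - (cmod x)^2 = Re ((y - x) * cnj (y + x))"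
  unfolding cmod_power2 by (simp add: algebra_simps power2_eq_square)
lemma im_swap: "Im (cnj a ^2 * b^2) = - Im (cnj b^2 * a^2)"
  by (simp add: algebra_simps power2_eq_square)
lemma sum_shift1: "(\<Sum>j\<in>{1..N}. f j) = (\<Sum>i<N. f (Suc i)::real)"
  by (simp add: sum_bounds_lt_plus1)

definition Fgen :: "(nat \<Rightarrow> (nat\<Rightarrow>complex) \<Rightarrow> (nat\<Rightarrow>complex) \<Rightarrow> nat \<Rightarrow> real) \<Rightarrow> nat \<Rightarrow> (nat\<Rightarrow>complex) \<Rightarrow> (nat\<Rightarrow>complex) \<Rightarrow> nat \<Rightarrow> complex" where
"Fgen c N x y j = -\<i> * complex_of_real (c N x y j) * bmid N x y j + 2*\<i>*cnj (bmid N x y j) * ((bmid N x y (j-1))^2 + (bmid N x y (j+1))^2)"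

lemma midpt_gen: "F_midpt = Fgen (\<lambda>N x y j. (cmod (bmid N x y j))^2)"
  by (auto simp: fun_eq_iff F_midpt_def Fgen_def Let_def)
lemma mass_gen: "F_mass = Fgen (\<lambda>N x y j. absq_mid x y j)"
  by (auto simp: fun_eq_iff F_mass_def Fgen_def Let_def add.commute)

lemma mass_cons:
  assumes st: "scheme_step (Fgen c) N dt x y"
  shows "(\<Sum>j\<in>{1..N}. (cmod (y j))^2) = (\<Sum>j\<in>{1..N}. (cmod (x j))^2)"
proof -
  define m where "m = bmid N x y"
  define g where "g i = Im (cnj (m i)^2 * (m (Suc i))^2)" for i
  have m0: "m 0 = 0" and mN: "m (Suc N) = 0" by (auto simp: m_def bmid_def)
  have eq: "(cmod (y j))^2 - (cmod (x j))^2 = -4*dt*(g j - g (j-1))" if j: "j \<in> {1..N}" for j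
  proof -
    have yj: "y j = x j + complex_of_real dt * Fgen c N x y j" using st j by (auto simp: scheme_step_def)
    have mj: "m j = (x j + y j)/2" using j by (auto simp: m_def bmid_def)
    have "(cmod (y j))^2 - (cmod (x j))^2 = Re ((y j - x j) * cnj (y j + x j))" by (rule norm_diff)
    also have "\<dots> = 2 * dt * Re (Fgen c N x y j * cnj (m j))"
    proof -
      have h1: "y j - x j = complex_of_real dt * Fgen c N x y j" using yj by simp
      have h2: "y j + x j = 2 * m j" using mj by (simp add: algebra_simps)
      show ?thesis unfolding h1 h2 by (simp add: mult_ac)
    qed
    also have "Fgen c N x y j = -\<i> * complex_of_real (c N x y j) * m j + 2*\<i>*cnj (m j) * ((m (j-1))^2 + (m (j+1))^2)"
      by (simp add: Fgen_def m_def)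
    also have "Re (\<dots> * cnj (m j)) = -2*(Im (cnj (m j)^2 * (m (j-1))^2) + Im (cnj (m j)^2 * (m (j+1))^2))"
      by (rule re_key)
    also have "Im (cnj (m j)^2 * (m (j-1))^2) = - g (j-1)"
      using j im_swap[of "m j" "m (j-1)"] by (simp add: g_def)
    also have "Im (cnj (m j)^2 * (m (j+1))^2) = g j" by (simp add: g_def)
    finally show ?thesis by (simp add: algebra_simps)
  qed
  have "(\<Sum>j\<in>{1..N}. (cmod (y j))^2 - (cmod (x j))^2) = (\<Sum>j\<in>{1..N}. -4*dt*(g j - g (j-1)))"
    by (rule sum.cong) (auto simp: eq)
  also have "\<dots> = (\<Sum>i<N. -4*dt*(g (Suc i) - g i))" by (rule trans[OF sum_shift1]) simp
  also have "\<dots> = -4*dt*(g N - g 0)" by (simp only: sum_distrib_left[symmetric] sum_negf sum_lessThan_telescope)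
  also have "\<dots> = 0" by (simp add: g_def m0 mN)
  finally show ?thesis by (simp add: sum_subtractf)
qed

lemma bmid_bound:
  assumes "\<forall>i\<in>{1..N}. cmod (x i) \<le> R" "\<forall>i\<in>{1..N}. cmod (u i) \<le> R" "0 \<le> R"
  shows "cmod (bmid N x u i) \<le> R"
proof (cases "1 \<le> i \<and> i \<le> N")
  case True
  have "cmod ((x i + u i)/2) \<le> (cmod (x i) + cmod (u i))/2"
    by (simp add: norm_divide norm_triangle_ineq divide_right_mono)
  also have "\<dots> \<le> R"
  proof -
    have "cmod (x i) \<le> R" "cmod (u i) \<le> R" using assms True by auto
    then have "cmod (x i) + cmod (u i) \<le> 2*R" by linarith
    then show ?thesis by simp
  qed
  finally show ?thesis using True by (simp add: bmid_def)
qed (use assms in \<open>auto simp: bmid_def\<close>)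

lemma bmid_diff:
  assumes "\<forall>i\<in>{1..N}. cmod (u i - v i) \<le> d" "0 \<le> d"
  shows "cmod (bmid N x u i - bmid N x v i) \<le> d"
proof (cases "1 \<le> i \<and> i \<le> N")
  case True
  have eq: "bmid N x u i - bmid N x v i = (u i - v i)/2" using True by (simp add: bmid_def add_divide_distrib)
  have "cmod (bmid N x u i - bmid N x v i) = cmod (u i - v i)/2" by (simp only: eq norm_divide) simp
  also have "\<dots> \<le> d"
  proof -
    have "cmod (u i - v i) \<le> d" using assms True by auto
    then show ?thesis using assms by simp
  qed
  finally show ?thesis .
qed (use assms in \<open>auto simp: bmid_def\<close>)

lemma triple:
  fixes a1 a2 a3 b1 b2 b3 :: complex
  assumes "cmod a2 \<le> R" "cmod a3 \<le> R" "cmod b1 \<le> R" "cmod b2 \<le> R" "0 \<le> R"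
  shows "cmod (a1*a2*a3 - b1*b2*b3) \<le> R^2 * (cmod (a1-b1) + cmod (a2-b2) + cmod (a3-b3))"
proof -
  have e: "a1*a2*a3 - b1*b2*b3 = (a1-b1)*a2*a3 + b1*(a2-b2)*a3 + b1*b2*(a3-b3)"
    by (simp add: algebra_simps)
  have t1: "cmod ((a1-b1)*a2*a3) \<le> cmod (a1-b1) * R * R"
    unfolding norm_mult by (intro mult_mono) (use assms in auto)
  have t2: "cmod (b1*(a2-b2)*a3) \<le> R * cmod (a2-b2) * R"
    unfolding norm_mult by (intro mult_mono) (use assms in auto)
  have t3: "cmod (b1*b2*(a3-b3)) \<le> R * R * cmod (a3-b3)"
    unfolding norm_mult by (intro mult_mono) (use assms in auto)
  have "cmod (a1*a2*a3 - b1*b2*b3) \<le> cmod ((a1-b1)*a2*a3) + cmod (b1*(a2-b2)*a3) + cmod (b1*b2*(a3-b3))"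
    unfolding e by (meson norm_triangle_le add_mono order_refl norm_triangle_ineq)
  also have "\<dots> \<le> R^2 * (cmod (a1-b1) + cmod (a2-b2) + cmod (a3-b3))"
    using t1 t2 t3 by (simp add: power2_eq_square algebra_simps)
  finally show ?thesis .
qed

lemma Fgen_bound:
  assumes mb: "\<forall>i. cmod (bmid N x u i) \<le> R" and cb: "\<bar>c N x u j\<bar> \<le> R^2" and R: "0 \<le> R"
  shows "cmod (Fgen c N x u j) \<le> 5*R^3"
proof -
  define a where "a = bmid N x u j"
  define p where "p = bmid N x u (j-1)"
  define q where "q = bmid N x u (j+1)"
  have a: "cmod a \<le> R" and p: "cmod p \<le> R" and q: "cmod q \<le> R" using mb by (auto simp: a_def p_def q_def)
  have "cmod (Fgen c N x u j) \<le> cmod (-\<i> * complex_of_real (c N x u j) * a) + cmod (2*\<i>*cnj a * (p^2+q^2))"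
    unfolding Fgen_def a_def p_def q_def by (rule norm_triangle_ineq)
  also have "cmod (-\<i> * complex_of_real (c N x u j) * a) = \<bar>c N x u j\<bar> * cmod a"
    by (simp add: norm_mult)
  also have "\<dots> \<le> R^2 * R" by (intro mult_mono) (use a cb R in auto)
  also have "cmod (2*\<i>*cnj a * (p^2+q^2)) = 2 * cmod a * cmod (p^2+q^2)"
    by (simp add: norm_mult)
  also have "\<dots> \<le> 2 * R * (R^2 + R^2)"
  proof -
    have "cmod (p^2+q^2) \<le> cmod p ^2 + cmod q^2" by (metis norm_power norm_triangle_ineq)
    also have "\<dots> \<le> R^2 + R^2" by (intro add_mono power_mono) (use p q in auto)
    finally show ?thesis by (intro mult_mono) (use a R in auto)
  qed
  finally show ?thesis by (simp add: power2_eq_square power3_eq_cube algebra_simps)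
qed

lemma Fgen_lip:
  assumes mu: "\<forall>i. cmod (bmid N x u i) \<le> R" and mv: "\<forall>i. cmod (bmid N x v i) \<le> R"
    and md: "\<forall>i. cmod (bmid N x u i - bmid N x v i) \<le> d"
    and cb: "\<bar>c N x u j\<bar> \<le> R^2" and cd: "\<bar>c N x u j - c N x v j\<bar> \<le> 2*R*d"
    and R: "0 \<le> R" and d: "0 \<le> d"
  shows "cmod (Fgen c N x u j - Fgen c N x v j) \<le> 15*R^2*d"
proof -
  define a where "a = bmid N x u j"
  define p where "p = bmid N x u (j-1)"
  define q where "q = bmid N x u (j+1)"
  define a' where "a' = bmid N x v j"
  define p' where "p' = bmid N x v (j-1)"
  define q' where "q' = bmid N x v (j+1)"
  define cu where "cu = c N x u j"
  define cv where "cv = c N x v j"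
  have a: "cmod a \<le> R" and p: "cmod p \<le> R" and q: "cmod q \<le> R" using mu by (auto simp: a_def p_def q_def)
  have a': "cmod a' \<le> R" and p': "cmod p' \<le> R" and q': "cmod q' \<le> R" using mv by (auto simp: a'_def p'_def q'_def)
  have da: "cmod (a - a') \<le> d" and dp: "cmod (p - p') \<le> d" and dq: "cmod (q - q') \<le> d"
    using md by (auto simp: a_def p_def q_def a'_def p'_def q'_def)
  have dca: "cmod (cnj a - cnj a') \<le> d" using da by (metis complex_cnj_diff complex_mod_cnj)
  have e: "Fgen c N x u j - Fgen c N x v j =
      -\<i> * (complex_of_real cu * a - complex_of_real cv * a')
      + 2*\<i>*(cnj a * p * p - cnj a' * p' * p') + 2*\<i>*(cnj a * q * q - cnj a' * q' * q')"
    unfolding Fgen_def a_def p_def q_def a'_def p'_def q'_def cu_def cv_def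
    by (simp add: algebra_simps power2_eq_square)
  have T1: "cmod (complex_of_real cu * a - complex_of_real cv * a') \<le> 3*R^2*d"
  proof -
    have e1: "complex_of_real cu * a - complex_of_real cv * a' = complex_of_real cu * (a - a') + complex_of_real (cu - cv) * a'"
      by (simp add: algebra_simps)
    have f1: "cmod (complex_of_real cu * (a - a')) \<le> R^2 * d"
      unfolding norm_mult by (intro mult_mono) (use cb da in \<open>auto simp: cu_def\<close>)
    have cc: "cmod (complex_of_real (cu - cv)) \<le> 2*R*d"
      by (simp only: norm_of_real) (use cd in \<open>simp add: cu_def cv_def\<close>)
    moreover have "cmod (complex_of_real (cu - cv) * a') \<le> (2*R*d) * R"
      unfolding norm_mult by (intro mult_mono cc) (use a' R d in auto)
    moreover have "cmod (complex_of_real cu * a - complex_of_real cv * a') \<le> cmod (complex_of_real cu * (a - a')) + cmod (complex_of_real (cu - cv) * a')"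
      unfolding e1 by (rule norm_triangle_ineq)
    moreover have "(2*R*d) * R = 2*R^2*d" by (simp add: power2_eq_square)
    ultimately show ?thesis using f1 by linarith
  qed
  have T2: "cmod (cnj a * p * p - cnj a' * p' * p') \<le> R^2*(d+d+d)"
  proof -
    have "cmod (cnj a * p * p - cnj a' * p' * p') \<le> R^2*(cmod (cnj a - cnj a') + cmod (p-p') + cmod (p-p'))"
      by (rule triple) (use p a' p' R in auto)
    also have "\<dots> \<le> R^2*(d+d+d)" by (intro mult_left_mono add_mono) (use dca dp in auto)
    finally show ?thesis .
  qed
  have T3: "cmod (cnj a * q * q - cnj a' * q' * q') \<le> R^2*(d+d+d)"
  proof -
    have "cmod (cnj a * q * q - cnj a' * q' * q') \<le> R^2*(cmod (cnj a - cnj a') + cmod (q-q') + cmod (q-q'))"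
      by (rule triple) (use q a' q' R in auto)
    also have "\<dots> \<le> R^2*(d+d+d)" by (intro mult_left_mono add_mono) (use dca dq in auto)
    finally show ?thesis .
  qed
  have "cmod (Fgen c N x u j - Fgen c N x v j) \<le>
      cmod (complex_of_real cu * a - complex_of_real cv * a')
      + 2 * cmod (cnj a * p * p - cnj a' * p' * p') + 2 * cmod (cnj a * q * q - cnj a' * q' * q')"
  proof -
    let ?A = "complex_of_real cu * a - complex_of_real cv * a'"
    let ?B = "cnj a * p * p - cnj a' * p' * p'"
    let ?C = "cnj a * q * q - cnj a' * q' * q'"
    have "cmod (-\<i> * ?A + 2*\<i>*?B + 2*\<i>*?C) \<le> cmod (-\<i> * ?A + 2*\<i>*?B) + cmod (2*\<i>*?C)"
      by (rule norm_triangle_ineq)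
    moreover have "cmod (-\<i> * ?A + 2*\<i>*?B) \<le> cmod (-\<i> * ?A) + cmod (2*\<i>*?B)"
      by (rule norm_triangle_ineq)
    moreover have "cmod (-\<i> * ?A) = cmod ?A" "cmod (2*\<i>*?B) = 2 * cmod ?B" "cmod (2*\<i>*?C) = 2 * cmod ?C"
      by (simp_all add: norm_mult)
    ultimately show ?thesis unfolding e by linarith
  qed
  also have "\<dots> \<le> 15*R^2*d" using T1 T2 T3 by simp
  finally show ?thesis .
qed

lemma bmid_tendsto:
  assumes "\<forall>i. (\<lambda>k. Y k i) \<longlonglongrightarrow> y i"
  shows "(\<lambda>k. bmid N x (Y k) i) \<longlonglongrightarrow> bmid N x y i"
  unfolding bmid_def using assms by (auto intro!: tendsto_intros)

lemma Fgen_tendsto: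
  assumes "\<forall>i. (\<lambda>k. Y k i) \<longlonglongrightarrow> y i" "(\<lambda>k. c N x (Y k) j) \<longlonglongrightarrow> c N x y j"
  shows "(\<lambda>k. Fgen c N x (Y k) j) \<longlonglongrightarrow> Fgen c N x y j"
  unfolding Fgen_def by (intro tendsto_intros bmid_tendsto assms)

lemma sqdiff:
  assumes "cmod a \<le> R" "cmod b \<le> R" "cmod (a - b) \<le> d"
  shows "\<bar>(cmod a)^2 - (cmod b)^2\<bar> \<le> 2*R*d"
proof -
  have "\<bar>cmod a - cmod b\<bar> \<le> d" using norm_triangle_ineq3[of a b] assms by linarith
  moreover have "\<bar>cmod a + cmod b\<bar> \<le> 2*R" using assms by simp
  moreover have "(cmod a)^2 - (cmod b)^2 = (cmod a - cmod b) * (cmod a + cmod b)"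
    by (simp add: power2_eq_square algebra_simps)
  ultimately have "\<bar>(cmod a)^2 - (cmod b)^2\<bar> \<le> d * (2*R)"
    by (simp only: abs_mult) (intro mult_mono, auto)
  then show ?thesis by (simp add: mult_ac)
qed

lemma cM_H1:
  assumes "\<forall>i\<in>{1..N}. cmod (x i) \<le> R" "\<forall>i\<in>{1..N}. cmod (u i) \<le> R" "0 \<le> R"
  shows "\<bar>(cmod (bmid N x u j))^2\<bar> \<le> R^2"
  using bmid_bound[OF assms, of j] by (simp add: power_mono)

lemma cM_H2:
  assumes "\<forall>i\<in>{1..N}. cmod (x i) \<le> R" "\<forall>i\<in>{1..N}. cmod (u i) \<le> R" "\<forall>i\<in>{1..N}. cmod (v i) \<le> R" "0 \<le> R"
    "0 \<le> d" "\<forall>i\<in>{1..N}. cmod (u i - v i) \<le> d"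
  shows "\<bar>(cmod (bmid N x u j))^2 - (cmod (bmid N x v j))^2\<bar> \<le> 2*R*d"
  by (rule sqdiff[OF bmid_bound[OF assms(1,2,4)] bmid_bound[OF assms(1,3,4)] bmid_diff[OF assms(6,5)]])

lemma cS_H1:
  assumes "j \<in> {1..N}" "\<forall>i\<in>{1..N}. cmod (x i) \<le> R" "\<forall>i\<in>{1..N}. cmod (u i) \<le> R" "0 \<le> R"
  shows "\<bar>absq_mid x u j\<bar> \<le> R^2"
proof -
  have "(cmod (x j))^2 \<le> R^2" "(cmod (u j))^2 \<le> R^2" using assms by (auto intro: power_mono)
  then show ?thesis by (simp add: absq_mid_def)
qed

lemma cS_H2:
  assumes "j \<in> {1..N}" "\<forall>i\<in>{1..N}. cmod (u i) \<le> R" "\<forall>i\<in>{1..N}. cmod (v i) \<le> R" "0 \<le> R"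
    "0 \<le> d" "\<forall>i\<in>{1..N}. cmod (u i - v i) \<le> d"
  shows "\<bar>absq_mid x u j - absq_mid x v j\<bar> \<le> 2*R*d"
proof -
  have "\<bar>(cmod (u j))^2 - (cmod (v j))^2\<bar> \<le> 2*R*d" by (rule sqdiff) (use assms in auto)
  moreover have "absq_mid x u j - absq_mid x v j = ((cmod (u j))^2 - (cmod (v j))^2)/2"
    by (simp add: absq_mid_def field_simps)
  ultimately show ?thesis using assms(4,5) by (simp add: zero_le_mult_iff)
qed

lemma exist_step:
  assumes xb: "\<forall>i\<in>{1..N}. cmod (x i) \<le> r" and r: "0 \<le> r" and RR: "R = r + 1"
    and dt: "0 < dt" and dt1: "dt * (5*R^3) \<le> 1" and dt2: "real N * dt * (15*R^2) \<le> 1/2"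
    and H1: "\<forall>u j. j\<in>{1..N} \<longrightarrow> (\<forall>i\<in>{1..N}. cmod (u i) \<le> R) \<longrightarrow> \<bar>c N x u j\<bar> \<le> R^2"
    and H2: "\<forall>u v j d. j\<in>{1..N} \<longrightarrow> (\<forall>i\<in>{1..N}. cmod (u i) \<le> R) \<longrightarrow> (\<forall>i\<in>{1..N}. cmod (v i) \<le> R)
              \<longrightarrow> 0 \<le> d \<longrightarrow> (\<forall>i\<in>{1..N}. cmod (u i - v i) \<le> d) \<longrightarrow> \<bar>c N x u j - c N x v j\<bar> \<le> 2*R*d"
    and H3: "\<forall>Y y j. (\<forall>i. (\<lambda>k. Y k i) \<longlonglongrightarrow> y i) \<longrightarrow> (\<lambda>k. c N x (Y k) j) \<longlonglongrightarrow> c N x y j"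
  shows "\<exists>y. scheme_step (Fgen c) N dt x y"
proof -
  define bnd where "bnd u \<longleftrightarrow> (\<forall>i\<in>{1..N}. cmod (u i) \<le> R)" for u :: "nat \<Rightarrow> complex"
  define G where "G u = (\<lambda>j. if 1 \<le> j \<and> j \<le> N then x j + complex_of_real dt * Fgen c N x u j else 0)" for u
  define Y where "Y k = (G ^^ k) (\<lambda>_. 0)" for k
  have YS: "Y (Suc k) = G (Y k)" for k by (simp add: Y_def)
  have Y0: "Y 0 = (\<lambda>_. 0)" by (simp add: Y_def)
  have R0: "0 \<le> R" "1 \<le> R" using r RR by auto
  have xbR: "\<forall>i\<in>{1..N}. cmod (x i) \<le> R" using xb RR by auto
  have Gmap: "bnd (G u)" if bu: "bnd u" for u
    unfolding bnd_def
  proof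
    fix i assume i: "i \<in> {1..N}"
    have mb: "\<forall>k. cmod (bmid N x u k) \<le> R" using bmid_bound[OF xbR _ R0(1)] bu by (auto simp: bnd_def)
    have cb: "\<bar>c N x u i\<bar> \<le> R^2" using H1 i bu by (auto simp: bnd_def)
    have Fb: "cmod (Fgen c N x u i) \<le> 5*R^3" by (rule Fgen_bound[where c=c, OF mb cb R0(1)])
    have "cmod (G u i) = cmod (x i + complex_of_real dt * Fgen c N x u i)" using i by (simp add: G_def)
    also have "\<dots> \<le> cmod (x i) + dt * cmod (Fgen c N x u i)"
      using norm_triangle_ineq[of "x i" "complex_of_real dt * Fgen c N x u i"] dt by (simp add: norm_mult)
    also have "\<dots> \<le> cmod (x i) + dt * (5*R^3)" using Fb dt by (simp add: mult_left_mono)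
    finally have "cmod (G u i) \<le> cmod (x i) + dt * (5*R^3)" .
    moreover have "cmod (x i) \<le> r" using xb i by auto
    ultimately show "cmod (G u i) \<le> R" using dt1 RR by linarith
  qed
  have Ybnd: "bnd (Y k)" for k
  proof (induction k)
    case 0 then show ?case using R0 by (simp add: Y0 bnd_def)
  next
    case (Suc k) then show ?case by (simp add: YS Gmap)
  qed
  have Yout: "Y k i = 0" if "\<not> (1 \<le> i \<and> i \<le> N)" for k i
    using that by (cases k) (auto simp: Y0 YS G_def)
  define D where "D u v = (\<Sum>i\<in>{1..N}. cmod (u i - v i))" for u v :: "nat \<Rightarrow> complex"
  have Dge: "cmod (u i - v i) \<le> D u v" if "i \<in> {1..N}" for u v i
    unfolding D_def by (rule member_le_sum) (use that in auto)
  have D0: "0 \<le> D u v" for u v unfolding D_def by (simp add: sum_nonneg)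
  have Glip: "D (G u) (G v) \<le> D u v / 2" if bu: "bnd u" and bv: "bnd v" for u v
  proof -
    define d where "d = D u v"
    have d0: "0 \<le> d" by (simp add: d_def D0)
    have ud: "\<forall>i\<in>{1..N}. cmod (u i - v i) \<le> d" using Dge by (auto simp: d_def)
    have each: "cmod (G u i - G v i) \<le> dt * (15*R^2*d)" if i: "i \<in> {1..N}" for i
    proof -
      have mu: "\<forall>k. cmod (bmid N x u k) \<le> R" using bmid_bound[OF xbR _ R0(1)] bu by (auto simp: bnd_def)
      have mv: "\<forall>k. cmod (bmid N x v k) \<le> R" using bmid_bound[OF xbR _ R0(1)] bv by (auto simp: bnd_def)
      have md: "\<forall>k. cmod (bmid N x u k - bmid N x v k) \<le> d" using bmid_diff[OF ud d0] by auto
      have cb: "\<bar>c N x u i\<bar> \<le> R^2" using H1 i bu by (auto simp: bnd_def)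
      have cd: "\<bar>c N x u i - c N x v i\<bar> \<le> 2*R*d" using H2 i bu bv d0 ud by (auto simp: bnd_def)
      have L: "cmod (Fgen c N x u i - Fgen c N x v i) \<le> 15*R^2*d"
        by (rule Fgen_lip[where c=c, OF mu mv md cb cd R0(1) d0])
      have "G u i - G v i = complex_of_real dt * (Fgen c N x u i - Fgen c N x v i)"
        using i by (simp add: G_def algebra_simps)
      then have "cmod (G u i - G v i) = dt * cmod (Fgen c N x u i - Fgen c N x v i)"
        using dt by (simp add: norm_mult)
      also have "\<dots> \<le> dt * (15*R^2*d)" using L dt by (intro mult_left_mono) auto
      finally show ?thesis .
    qed
    have "D (G u) (G v) \<le> (\<Sum>i\<in>{1..N}. dt * (15*R^2*d))"
      unfolding D_def by (rule sum_mono) (use each in auto)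
    also have "\<dots> = (real N * dt * (15*R^2)) * d" by simp
    also have "\<dots> \<le> (1/2) * d" using dt2 d0 by (intro mult_right_mono) auto
    finally show ?thesis by (simp add: d_def)
  qed
  define E where "E = D (Y 1) (Y 0)"
  have Dk: "D (Y (Suc k)) (Y k) \<le> E * (1/2)^k" for k
  proof (induction k)
    case 0 then show ?case by (simp add: E_def)
  next
    case (Suc k)
    have "D (Y (Suc (Suc k))) (Y (Suc k)) = D (G (Y (Suc k))) (G (Y k))" by (simp add: YS)
    also have "\<dots> \<le> D (Y (Suc k)) (Y k) / 2" by (rule Glip[OF Ybnd Ybnd])
    also have "\<dots> \<le> E * (1/2)^k / 2" using Suc by simp
    finally show ?case by simp
  qed
  have comp: "cmod (Y (Suc k) j - Y k j) \<le> E * (1/2)^k" for k j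
  proof (cases "1 \<le> j \<and> j \<le> N")
    case True then show ?thesis using Dge[of j "Y (Suc k)" "Y k"] Dk[of k] by auto
  next
    case False then show ?thesis using Yout[OF False] D0[of "Y 1" "Y 0"] by (simp add: E_def)
  qed
  have summ: "summable (\<lambda>k. Y (Suc k) j - Y k j)" for j
    by (rule summable_comparison_test[where g = "\<lambda>k. E * (1/2)^k"])
       (use comp in \<open>auto intro!: summable_mult summable_geometric\<close>)
  define y where "y j = suminf (\<lambda>k. Y (Suc k) j - Y k j)" for j
  have conv: "(\<lambda>k. Y k j) \<longlonglongrightarrow> y j" for j
  proof -
    have "(\<lambda>n. \<Sum>k<n. Y (Suc k) j - Y k j) \<longlonglongrightarrow> y j" unfolding y_def by (rule summable_LIMSEQ[OF summ])
    moreover have "(\<Sum>k<n. Y (Suc k) j - Y k j) = Y n j" for n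
      using sum_lessThan_telescope[of "\<lambda>k. Y k j" n] by (simp add: Y0)
    ultimately show ?thesis by simp
  qed
  have convall: "\<forall>i. (\<lambda>k. Y k i) \<longlonglongrightarrow> y i" using conv by blast
  have fixp: "G y j = y j" for j
  proof -
    have a: "(\<lambda>k. G (Y k) j) \<longlonglongrightarrow> y j"
      using LIMSEQ_Suc[OF conv[of j]] by (simp add: YS)
    have b: "(\<lambda>k. G (Y k) j) \<longlonglongrightarrow> G y j"
    proof (cases "1 \<le> j \<and> j \<le> N")
      case True
      have "(\<lambda>k. Fgen c N x (Y k) j) \<longlonglongrightarrow> Fgen c N x y j"
        by (rule Fgen_tendsto[OF convall]) (use H3 convall in blast)
      then show ?thesis using True by (simp add: G_def tendsto_intros)
    next
      case False
      then have "G u j = 0" for u by (auto simp: G_def)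
      then show ?thesis by simp
    qed
    show ?thesis using LIMSEQ_unique[OF b a] .
  qed
  have "scheme_step (Fgen c) N dt x y"
    unfolding scheme_step_def vecN_def
  proof (intro conjI allI impI ballI)
    fix j :: nat assume "j = 0 \<or> N < j"
    then show "y j = 0" using fixp[of j] by (auto simp: G_def)
  next
    fix j assume "j \<in> {1..N}"
    then show "y j = x j + complex_of_real dt * Fgen c N x y j" using fixp[of j] by (auto simp: G_def)
  qed
  then show ?thesis by blast
qed

definition goodc :: "(nat \<Rightarrow> (nat\<Rightarrow>complex) \<Rightarrow> (nat\<Rightarrow>complex) \<Rightarrow> nat \<Rightarrow> real) \<Rightarrow> nat \<Rightarrow> bool" where
"goodc c N \<longleftrightarrow> (\<forall>x R. (\<forall>i\<in>{1..N}. cmod (x i) \<le> R) \<longrightarrow> 0 \<le> R \<longrightarrow>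
   (\<forall>u j. j\<in>{1..N} \<longrightarrow> (\<forall>i\<in>{1..N}. cmod (u i) \<le> R) \<longrightarrow> \<bar>c N x u j\<bar> \<le> R^2) \<and>
   (\<forall>u v j d. j\<in>{1..N} \<longrightarrow> (\<forall>i\<in>{1..N}. cmod (u i) \<le> R) \<longrightarrow> (\<forall>i\<in>{1..N}. cmod (v i) \<le> R)
              \<longrightarrow> 0 \<le> d \<longrightarrow> (\<forall>i\<in>{1..N}. cmod (u i - v i) \<le> d) \<longrightarrow> \<bar>c N x u j - c N x v j\<bar> \<le> 2*R*d) \<and>
   (\<forall>Y y j. (\<forall>i. (\<lambda>k. Y k i) \<longlonglongrightarrow> y i) \<longrightarrow> (\<lambda>k. c N x (Y k) j) \<longlonglongrightarrow> c N x y j))"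

lemma goodc_M: "goodc (\<lambda>N x y j. (cmod (bmid N x y j))^2) N"
  unfolding goodc_def
proof (intro allI impI conjI)
  fix x R u j assume "\<forall>i\<in>{1..N}. cmod (x i) \<le> R" "0 \<le> R" "\<forall>i\<in>{1..N}. cmod (u i) \<le> R"
  then show "\<bar>(cmod (bmid N x u j))^2\<bar> \<le> R^2" by (intro cM_H1) auto
next
  fix x R u v j d assume "\<forall>i\<in>{1..N}. cmod (x i) \<le> R" "0 \<le> R" "\<forall>i\<in>{1..N}. cmod (u i) \<le> R"
    "\<forall>i\<in>{1..N}. cmod (v i) \<le> R" "0 \<le> d" "\<forall>i\<in>{1..N}. cmod (u i - v i) \<le> d"
  then show "\<bar>(cmod (bmid N x u j))^2 - (cmod (bmid N x v j))^2\<bar> \<le> 2*R*d" by (intro cM_H2) auto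
next
  fix x R and Y :: "nat \<Rightarrow> nat \<Rightarrow> complex" and y :: "nat \<Rightarrow> complex" and j assume "\<forall>i. (\<lambda>k. Y k i) \<longlonglongrightarrow> y i"
  then show "(\<lambda>k. (cmod (bmid N x (Y k) j))^2) \<longlonglongrightarrow> (cmod (bmid N x y j))^2"
    by (intro tendsto_intros bmid_tendsto)
qed

lemma goodc_S: "goodc (\<lambda>N x y j. absq_mid x y j) N"
  unfolding goodc_def
proof (intro allI impI conjI)
  fix x R u j assume "\<forall>i\<in>{1..N}. cmod (x i) \<le> R" "0 \<le> R" "j\<in>{1..N}" "\<forall>i\<in>{1..N}. cmod (u i) \<le> R"
  then show "\<bar>absq_mid x u j\<bar> \<le> R^2" by (intro cS_H1) auto
next
  fix x R u v j d assume "\<forall>i\<in>{1..N}. cmod (x i) \<le> R" "0 \<le> R" "j\<in>{1..N}" "\<forall>i\<in>{1..N}. cmod (u i) \<le> R"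
    "\<forall>i\<in>{1..N}. cmod (v i) \<le> R" "0 \<le> d" "\<forall>i\<in>{1..N}. cmod (u i - v i) \<le> d"
  then show "\<bar>absq_mid x u j - absq_mid x v j\<bar> \<le> 2*R*d" by (intro cS_H2) auto
next
  fix x R and Y :: "nat \<Rightarrow> nat \<Rightarrow> complex" and y :: "nat \<Rightarrow> complex" and j assume "\<forall>i. (\<lambda>k. Y k i) \<longlonglongrightarrow> y i"
  then show "(\<lambda>k. absq_mid x (Y k) j) \<longlonglongrightarrow> absq_mid x y j"
    unfolding absq_mid_def by (intro tendsto_intros) auto
qed

lemma main_gen:
  assumes gc: "goodc c N"
  shows "\<exists>dt1>0. \<forall>dt. 0 < dt \<and> dt \<le> dt1 \<longrightarrow>
           (\<forall>n (b :: nat \<Rightarrow> nat \<Rightarrow> complex).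
              b 0 = b0 \<and> (\<forall>k<n. scheme_step (Fgen c) N dt (b k) (b (Suc k)))
              \<longrightarrow> (\<exists>y. scheme_step (Fgen c) N dt (b n) y))"
proof -
  define M where "M = (\<Sum>j\<in>{1..N}. (cmod (b0 j))^2)"
  define r where "r = sqrt M"
  define R where "R = r + 1"
  define S where "S = 5*R^3 + 30 * real N * R^2"
  have M0: "0 \<le> M" unfolding M_def by (simp add: sum_nonneg)
  have r0: "0 \<le> r" using M0 by (simp add: r_def)
  have R1: "1 \<le> R" using r0 by (simp add: R_def)
  have S0: "0 < S" using R1 unfolding S_def by (simp add: add_pos_nonneg)
  show ?thesis
  proof (intro exI[of _ "1/S"] conjI allI impI)
    show "0 < 1/S" using S0 by simp
    fix dt n and b :: "nat \<Rightarrow> nat \<Rightarrow> complex"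
    assume dt: "0 < dt \<and> dt \<le> 1/S"
    assume bh: "b 0 = b0 \<and> (\<forall>k<n. scheme_step (Fgen c) N dt (b k) (b (Suc k)))"
    have dtS: "dt * S \<le> 1" using dt S0 by (simp add: le_divide_eq mult.commute)
    have mass: "(\<Sum>j\<in>{1..N}. (cmod (b k j))^2) = M" if "k \<le> n" for k
      using that
    proof (induction k)
      case 0 then show ?case using bh by (simp add: M_def)
    next
      case (Suc k)
      then have "scheme_step (Fgen c) N dt (b k) (b (Suc k))" using bh by auto
      then show ?case using mass_cons Suc by fastforce
    qed
    have xb: "\<forall>i\<in>{1..N}. cmod (b n i) \<le> r"
    proof
      fix i assume i: "i \<in> {1..N}"
      have "(cmod (b n i))^2 \<le> (\<Sum>j\<in>{1..N}. (cmod (b n j))^2)"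
        by (rule member_le_sum) (use i in auto)
      then have "(cmod (b n i))^2 \<le> M" using mass[of n] by simp
      then show "cmod (b n i) \<le> r" unfolding r_def by (simp add: real_le_rsqrt)
    qed
    have g: "(\<forall>u j. j\<in>{1..N} \<longrightarrow> (\<forall>i\<in>{1..N}. cmod (u i) \<le> R) \<longrightarrow> \<bar>c N (b n) u j\<bar> \<le> R^2) \<and>
      (\<forall>u v j d. j\<in>{1..N} \<longrightarrow> (\<forall>i\<in>{1..N}. cmod (u i) \<le> R) \<longrightarrow> (\<forall>i\<in>{1..N}. cmod (v i) \<le> R)
              \<longrightarrow> 0 \<le> d \<longrightarrow> (\<forall>i\<in>{1..N}. cmod (u i - v i) \<le> d) \<longrightarrow> \<bar>c N (b n) u j - c N (b n) v j\<bar> \<le> 2*R*d) \<and>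
      (\<forall>Y y j. (\<forall>i. (\<lambda>k. Y k i) \<longlonglongrightarrow> y i) \<longrightarrow> (\<lambda>k. c N (b n) (Y k) j) \<longlonglongrightarrow> c N (b n) y j)"
    proof -
      have xbR: "\<forall>i\<in>{1..N}. cmod (b n i) \<le> R" using xb by (auto simp: R_def)
      have R0: "0 \<le> R" using R1 by simp
      show ?thesis using gc[unfolded goodc_def, THEN spec[of _ "b n"], THEN spec[of _ R]] xbR R0 by blast
    qed
    have d1: "dt * (5*R^3) \<le> 1"
    proof -
      have "dt * (5*R^3) \<le> dt * S" using dt R1 unfolding S_def by (intro mult_left_mono) auto
      then show ?thesis using dtS by linarith
    qed
    have d2: "real N * dt * (15*R^2) \<le> 1/2"
    proof -
      have "real N * dt * (15*R^2) = dt * (30 * real N * R^2) / 2" by simp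
      also have "dt * (30 * real N * R^2) \<le> dt * S" using dt R1 unfolding S_def by (intro mult_left_mono) auto
      then have "dt * (30 * real N * R^2) / 2 \<le> 1/2" using dtS by linarith
      finally show ?thesis .
    qed
    show "\<exists>y. scheme_step (Fgen c) N dt (b n) y"
      by (rule exist_step[OF xb r0 R_def _ d1 d2]) (use dt g in auto)
  qed
qed

theorem corollary3p2:
  fixes N :: nat and b0 :: "nat \<Rightarrow> complex"
    and F :: "nat \<Rightarrow> (nat \<Rightarrow> complex) \<Rightarrow> (nat \<Rightarrow> complex) \<Rightarrow> nat \<Rightarrow> complex"
  assumes "1 \<le> N"
    and "vecN N b0"
    and "F = F_midpt \<or> F = F_mass"
  shows "\<exists>dt1>0. \<forall>dt. 0 < dt \<and> dt \<le> dt1 \<longrightarrow>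
           (\<forall>n (b :: nat \<Rightarrow> nat \<Rightarrow> complex).
              b 0 = b0 \<and> (\<forall>k<n. scheme_step F N dt (b k) (b (Suc k)))
              \<longrightarrow> (\<exists>y. scheme_step F N dt (b n) y))"
  using assms(3)
proof
  assume "F = F_midpt"
  then show ?thesis unfolding midpt_gen using main_gen[OF goodc_M] by simp
next
  assume "F = F_mass"
  then show ?thesis unfolding mass_gen using main_gen[OF goodc_S] by simp
qed

end
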